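(* Let $\mathcal{Y}$ be a measurable space, $\{Y_t\}_{t\ge0}$ a Markov chain on $\mathcal{Y}$ with transition kernel $P$, $H:\mathbb{R}^d\times\mathcal{Y}\to\mathbb{R}^d$, $h(w)\doteq\mathbb{E}_{y\sim d_{\mathcal{Y}}}[H(w,y)]$, satisfying the standing assumptions (A1)–(A3) below, and let $w_*$ be the fixed point of $h$. Let $w_0\in\mathbb{R}^d$, $\nu\in(0,1)$, $C_\alpha>0$, and $w_{t+1}=w_t+\alpha_t(H(w_t,Y_{t+1})-w_t)$ with $\alpha_t=\frac{C_\alpha}{(t+3)\ln^{\nu}(t+3)}$. Suppose $C_\alpha\ge\bar C_\alpha$ and that $C,C'$ and the positive integer $K$ are deterministic constants such that for every $\delta\in(0,1)$, with probability at least $1-\delta$, for all $t\ge0$, $\|w_t-w_*\|^2\le a(t)\big[\log(1/\delta)+b(t)\big]^{K}$, where $$a(t)\doteq C\exp\Big(-\frac{\ln^{1-\nu}(t+1)}{1-\nu}\Big),\qquad b(t)\doteq C'+\frac{\ln^{1-\nu}(t+1)}{1-\nu}$$ (such constants $\bar C_\alpha, C, C', K$ exist by the concentration result for this algorithm). Then for any $p\ge 2$ and any $t\ge 0$, $$\mathbb{E}\big[\|w_t-w_*\|^{2p}\big]\le\big(a(t)\,b(t)^{K}\big)^p+K p\, a(t)^p\exp(b(t))\,\big((Kp)!\big).$$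
   Context: (A1) $\{Y_t\}$ has a unique stationary distribution $d_{\mathcal{Y}}$ and there exist $\varrho\in[0,1)$, $C_A$ with $\int_{\mathcal{Y}}|P^n(y,y')-d_{\mathcal{Y}}(y')|\,\mathrm{d}y'\le C_A\varrho^n$ for all $y$, $n$ ($P^n$ the $n$-step kernel). (A2) There are $\kappa\in[0,1)$ and a norm $\|\cdot\|$ with $\|h(w)-h(w')\|\le\kappa\|w-w'\|$; $w_*$ is the unique fixed point of $h$. (A3) There is $L_h<\infty$ with $\|H(w,y)-H(w',y)\|\le L_h\|w-w'\|$ for all $w,w',y$ and $\sup_y\|H(0,y)\|<\infty$. For a non-integer $x\ge0$, $x!$ is understood as $\Gamma(x+1)$. *)

theory Defs
  imports "HOL-Probability.Probability"
begin

definition is_norm :: "('v::real_vector \<Rightarrow> real) \<Rightarrow> bool" where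
  "is_norm nrm \<longleftrightarrow>
     (\<forall>x. 0 \<le> nrm x) \<and> (\<forall>x. nrm x = 0 \<longleftrightarrow> x = 0) \<and>
     (\<forall>c x. nrm (c *\<^sub>R x) = \<bar>c\<bar> * nrm x) \<and>
     (\<forall>x y. nrm (x + y) \<le> nrm x + nrm y)"

primrec kstep :: "'y measure \<Rightarrow> ('y \<Rightarrow> 'y measure) \<Rightarrow> nat \<Rightarrow> 'y \<Rightarrow> 'y measure" where
  "kstep Ys P 0 y = return Ys y"
| "kstep Ys P (Suc n) y = bind (kstep Ys P n y) P"

text \<open>L1 distance between two probability measures, i.e. the integral of the absolute
  difference of densities; equals twice the total variation distance.\<close>
definition l1_dist :: "'y measure \<Rightarrow> 'y measure \<Rightarrow> real" where
  "l1_dist \<mu> \<nu> = 2 * (SUP A\<in>sets \<mu>. \<bar>measure \<mu> A - measure \<nu> A\<bar>)"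

text \<open>Y is a time-homogeneous Markov chain on Ys with transition kernel P
  (w.r.t. its natural filtration), defined on the probability space M.\<close>
definition markov_chain ::
  "'a measure \<Rightarrow> 'y measure \<Rightarrow> ('y \<Rightarrow> 'y measure) \<Rightarrow> (nat \<Rightarrow> 'a \<Rightarrow> 'y) \<Rightarrow> bool" where
  "markov_chain M Ys P Y \<longleftrightarrow>
     prob_space M \<and> (\<forall>t. Y t \<in> M \<rightarrow>\<^sub>M Ys) \<and> P \<in> Ys \<rightarrow>\<^sub>M prob_algebra Ys \<and>
     (\<forall>t (A :: nat \<Rightarrow> 'y set). (\<forall>i. A i \<in> sets Ys) \<longrightarrow>
        measure M {x \<in> space M. \<forall>i\<le>Suc t. Y i x \<in> A i} =
        (\<integral>x. indicator {x \<in> space M. \<forall>i\<le>t. Y i x \<in> A i} x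
               * measure (P (Y t x)) (A (Suc t)) \<partial>M))"

definition stationary_dist :: "'y measure \<Rightarrow> ('y \<Rightarrow> 'y measure) \<Rightarrow> 'y measure \<Rightarrow> bool" where
  "stationary_dist Ys P d \<longleftrightarrow> d \<in> space (prob_algebra Ys) \<and> bind d P = d"

primrec sa_iter ::
  "('w::real_vector \<Rightarrow> 'y \<Rightarrow> 'w) \<Rightarrow> (nat \<Rightarrow> real) \<Rightarrow> 'w \<Rightarrow> (nat \<Rightarrow> 'a \<Rightarrow> 'y) \<Rightarrow> nat \<Rightarrow> 'a \<Rightarrow> 'w" where
  "sa_iter H \<alpha> w0 Y 0 x = w0"
| "sa_iter H \<alpha> w0 Y (Suc t) x =
     sa_iter H \<alpha> w0 Y t x + \<alpha> t *\<^sub>R (H (sa_iter H \<alpha> w0 Y t x) (Y (Suc t) x) - sa_iter H \<alpha> w0 Y t x)"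

definition step_size :: "real \<Rightarrow> real \<Rightarrow> nat \<Rightarrow> real" where
  "step_size C\<alpha> \<nu> t = C\<alpha> / ((real t + 3) * ln (real t + 3) powr \<nu>)"

definition a_fun :: "real \<Rightarrow> real \<Rightarrow> nat \<Rightarrow> real" where
  "a_fun C \<nu> t = C * exp (- (ln (real t + 1) powr (1 - \<nu>) / (1 - \<nu>)))"

definition b_fun :: "real \<Rightarrow> real \<Rightarrow> nat \<Rightarrow> real" where
  "b_fun C' \<nu> t = C' + ln (real t + 1) powr (1 - \<nu>) / (1 - \<nu>)"

end

theory Submission
  imports Defs
begin

lemma is_norm_neg: "is_norm nrm \<Longrightarrow> nrm (- x) = nrm x"
  unfolding is_norm_def by (metis abs_minus_cancel abs_one mult_1 scaleR_minus1_left)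

lemma is_norm_sum: assumes "is_norm nrm" "finite S" shows "nrm (sum f S) \<le> (\<Sum>i\<in>S. nrm (f i))"
  using assms(2)
proof (induction S rule: finite_induct)
  case empty then show ?case using assms unfolding is_norm_def by (metis order_refl scaleR_zero_left sum.empty abs_zero mult_zero_left)
next
  case (insert x F)
  then show ?case using assms unfolding is_norm_def by (smt (verit) sum.insert)
qed

lemma is_norm_bound:
  fixes nrm :: "'v::euclidean_space \<Rightarrow> real"
  assumes "is_norm nrm" shows "nrm x \<le> (\<Sum>b\<in>Basis. nrm b) * norm x"
proof -
  have "nrm x = nrm (\<Sum>b\<in>Basis. inner x b *\<^sub>R b)" by (simp add: euclidean_representation)
  also have "\<dots> \<le> (\<Sum>b\<in>Basis. nrm (inner x b *\<^sub>R b))" by (rule is_norm_sum[OF assms]) simp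
  also have "\<dots> = (\<Sum>b\<in>Basis. \<bar>inner x b\<bar> * nrm b)" using assms unfolding is_norm_def by simp
  also have "\<dots> \<le> (\<Sum>b\<in>Basis. norm x * nrm b)"
    by (intro sum_mono mult_right_mono Basis_le_norm) (use assms in \<open>auto simp: is_norm_def\<close>)
  finally show ?thesis by (simp add: sum_distrib_left mult.commute)
qed

lemma is_norm_cont:
  fixes nrm :: "'v::euclidean_space \<Rightarrow> real"
  assumes "is_norm nrm" shows "continuous_on UNIV nrm"
proof -
  let ?B = "\<Sum>b\<in>Basis. nrm b"
  have B: "0 \<le> ?B" using assms by (auto simp: is_norm_def intro: sum_nonneg)
  have "?B-lipschitz_on UNIV nrm"
  proof (rule lipschitz_onI[OF _ B])
    fix x y :: 'v
    have "nrm x \<le> nrm (x - y) + nrm y" using assms unfolding is_norm_def by (metis diff_add_cancel)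
    moreover have "nrm y \<le> nrm (y - x) + nrm x" using assms unfolding is_norm_def by (metis diff_add_cancel)
    moreover have "nrm (y - x) = nrm (x - y)" using is_norm_neg[OF assms, of "x - y"] by simp
    ultimately have "\<bar>nrm x - nrm y\<bar> \<le> nrm (x - y)" by linarith
    also have "\<dots> \<le> ?B * norm (x - y)" by (rule is_norm_bound[OF assms])
    finally show "dist (nrm x) (nrm y) \<le> ?B * dist x y" by (simp add: dist_norm dist_real_def)
  qed
  then show ?thesis by (rule lipschitz_on_continuous_on)
qed

lemma is_norm_meas:
  fixes nrm :: "'v::euclidean_space \<Rightarrow> real"
  assumes "is_norm nrm" shows "nrm \<in> borel_measurable borel"
  by (rule borel_measurable_continuous_onI[OF is_norm_cont[OF assms]])

lemma sa_iter_meas: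
  fixes H :: "'v::euclidean_space \<Rightarrow> 'y \<Rightarrow> 'v"
  assumes Y: "\<And>t. Y t \<in> M \<rightarrow>\<^sub>M Ys"
    and H: "(\<lambda>(w, y). H w y) \<in> borel \<Otimes>\<^sub>M Ys \<rightarrow>\<^sub>M borel"
  shows "(\<lambda>x. sa_iter H \<alpha> w0 Y t x) \<in> borel_measurable M"
proof (induction t)
  case 0 then show ?case by simp
next
  case (Suc t)
  have "(\<lambda>x. (sa_iter H \<alpha> w0 Y t x, Y (Suc t) x)) \<in> M \<rightarrow>\<^sub>M borel \<Otimes>\<^sub>M Ys"
    using Suc Y by (intro measurable_Pair) auto
  from measurable_compose[OF this H]
  have "(\<lambda>x. H (sa_iter H \<alpha> w0 Y t x) (Y (Suc t) x)) \<in> borel_measurable M" by simp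
  then show ?case using Suc by (simp add: borel_measurable_add borel_measurable_scaleR borel_measurable_diff)
qed


lemma ftc_powr:
  fixes b \<rho> q :: real
  assumes "0 \<le> b" "b \<le> \<rho>" "1 < q"
  shows "(\<integral>\<^sup>+r. ennreal (q * r powr (q - 1)) * indicator {b..\<rho>} r \<partial>lborel) = ennreal (\<rho> powr q - b powr q)"
proof -
  have "((\<lambda>r. q * r powr (q - 1)) has_integral (\<rho> powr q - b powr q)) {b..\<rho>}"
  proof (rule fundamental_theorem_of_calculus_interior[OF assms(2)])
    show "continuous_on {b..\<rho>} (\<lambda>r. r powr q)"
      using assms by (intro continuous_on_powr') (auto intro: continuous_intros)
    fix x assume "x \<in> {b<..<\<rho>}"
    then have "0 < x" using assms by auto
    then show "((\<lambda>r. r powr q) has_vector_derivative q * x powr (q - 1)) (at x)"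
      using has_real_derivative_powr[of x q] by (simp add: has_real_derivative_iff_has_vector_derivative)
  qed
  then show ?thesis
    by (intro nn_integral_has_integral_lebesgue') (use assms in auto)
qed

lemma pointwise:
  fixes a b z p :: real and K :: nat
  assumes a: "0 < a" and b: "0 \<le> b" and z: "0 \<le> z" and K: "0 < K" and p: "1 < p"
  shows "ennreal (z powr p) \<le> ennreal (a powr p * b powr (K * p)) + ennreal (a powr p) *
     (\<integral>\<^sup>+r. ennreal (K * p * r powr (K * p - 1)) * indicator {r. b \<le> r \<and> a * r ^ K < z} r \<partial>lborel)"
proof -
  define \<rho> where "\<rho> = (z / a) powr (1 / K)"
  have \<rho>0: "0 \<le> \<rho>" unfolding \<rho>_def by simp
  have za: "z / a = \<rho> powr K" unfolding \<rho>_def using a z K by (simp add: powr_powr)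
  have zp: "z powr p = a powr p * \<rho> powr (K * p)"
  proof -
    have "z = a * (z / a)" using a by simp
    then have "z powr p = a powr p * (z / a) powr p" using a z by (metis less_imp_le divide_nonneg_pos powr_mult)
    also have "(z / a) powr p = \<rho> powr (K * p)" using za \<rho>0 by (simp add: powr_powr)
    finally show ?thesis .
  qed
  have set_eq: "{r. b \<le> r \<and> a * r ^ K < z} = {b..<\<rho>}"
  proof (intro set_eqI iffI)
    fix r assume r: "r \<in> {r. b \<le> r \<and> a * r ^ K < z}"
    then have r0: "0 \<le> r" using b by auto
    have rK: "r ^ K = r powr K"
      using r0 K by (cases "r = 0") (auto simp: powr_realpow)
    have "r powr K < \<rho> powr K" using r a rK za by (simp add: field_simps)
    then have "r < \<rho>" using r0 \<rho>0 K by (meson not_less powr_mono2 of_nat_0_le_iff)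
    then show "r \<in> {b..<\<rho>}" using r by auto
  next
    fix r assume r: "r \<in> {b..<\<rho>}"
    then have r0: "0 \<le> r" using b by auto
    have rK: "r ^ K = r powr K"
      using r0 K by (cases "r = 0") (auto simp: powr_realpow)
    have "r powr K < \<rho> powr K" using r r0 K by (intro powr_less_mono2) auto
    then have "a * r ^ K < z" using rK za a by (simp add: field_simps)
    then show "r \<in> {r. b \<le> r \<and> a * r ^ K < z}" using r by auto
  qed
  show ?thesis
  proof (cases "\<rho> \<le> b")
    case True
    have "z powr p \<le> a powr p * b powr (K * p)"
      unfolding zp using True \<rho>0 p by (intro mult_left_mono powr_mono2) (simp_all add: zero_le_mult_iff)
    then show ?thesis by (intro add_increasing2) auto
  next
    case False
    have "(\<integral>\<^sup>+r. ennreal (K * p * r powr (K * p - 1)) * indicator {r. b \<le> r \<and> a * r ^ K < z} r \<partial>lborel)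
       = (\<integral>\<^sup>+r. ennreal (K * p * r powr (K * p - 1)) * indicator {b..\<rho>} r \<partial>lborel)"
      unfolding set_eq
      by (intro nn_integral_cong_AE) (use AE_lborel_singleton[of \<rho>] in \<open>eventually_elim, auto simp: indicator_def\<close>)
    also have "\<dots> = ennreal (\<rho> powr (K * p) - b powr (K * p))"
    proof (rule ftc_powr)
      have "1 \<le> real K" using K by simp
      then have "p \<le> real K * p" using mult_right_mono[OF \<open>1 \<le> real K\<close>, of p] p by simp
      then show "1 < real K * p" using p by linarith
    qed (use b False in auto)
    finally have I: "(\<integral>\<^sup>+r. ennreal (K * p * r powr (K * p - 1)) * indicator {r. b \<le> r \<and> a * r ^ K < z} r \<partial>lborel)
       = ennreal (\<rho> powr (K * p) - b powr (K * p))" .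
    have "b powr (K * p) \<le> \<rho> powr (K * p)" using False b p by (intro powr_mono2) (simp_all add: zero_le_mult_iff)
    then have "z powr p = a powr p * b powr (K * p) + a powr p * (\<rho> powr (K * p) - b powr (K * p))"
      unfolding zp by (simp add: algebra_simps)
    then show ?thesis unfolding I
      using \<open>b powr (K * p) \<le> \<rho> powr (K * p)\<close>
      by (simp add: ennreal_plus[symmetric] ennreal_mult[symmetric] del: ennreal_plus)
  qed
qed


lemma gamma_bound:
  fixes b q :: real
  assumes b: "0 \<le> b" and q: "1 < q"
  shows "(\<integral>\<^sup>+r. ennreal (q * r powr (q - 1) * exp (b - r)) * indicator {b..} r \<partial>lborel) \<le> ennreal (q * exp b * Gamma q)"
proof -
  have "(\<integral>\<^sup>+r. ennreal (q * r powr (q - 1) * exp (b - r)) * indicator {b..} r \<partial>lborel)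
     \<le> (\<integral>\<^sup>+r. ennreal (q * exp b) * (ennreal (r powr (q - 1) / exp r) * indicator {0..} r) \<partial>lborel)"
  proof (intro nn_integral_mono)
    fix r :: real
    show "ennreal (q * r powr (q - 1) * exp (b - r)) * indicator {b..} r
        \<le> ennreal (q * exp b) * (ennreal (r powr (q - 1) / exp r) * indicator {0..} r)"
    proof (cases "b \<le> r")
      case True
      then have "q * r powr (q - 1) * exp (b - r) = q * exp b * (r powr (q - 1) / exp r)"
        by (simp add: exp_diff)
      moreover have "0 \<le> r" using True b by simp
      moreover have "ennreal (q * exp b * (r powr (q - 1) / exp r)) = ennreal (q * exp b) * ennreal (r powr (q - 1) / exp r)"
        using q by (intro ennreal_mult) auto
      ultimately show ?thesis using True by (simp add: indicator_def)
    qed auto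
  qed
  also have "\<dots> = ennreal (q * exp b) * (\<integral>\<^sup>+r. ennreal (r powr (q - 1) / exp r) * indicator {0..} r \<partial>lborel)"
    by (rule nn_integral_cmult) measurable
  also have "(\<integral>\<^sup>+r. ennreal (r powr (q - 1) / exp r) * indicator {0..} r \<partial>lborel) = ennreal (Gamma q)"
    using q by (intro nn_integral_has_integral_lebesgue' Gamma_integral_real) auto
  also have "ennreal (q * exp b) * ennreal (Gamma q) = ennreal (q * exp b * Gamma q)"
    using q by (simp add: ennreal_mult'[symmetric])
  finally show ?thesis .
qed

lemma powr_2p: "0 \<le> (y::real) \<Longrightarrow> y powr (2 * p) = (y ^ 2) powr p"
proof (cases "y = 0")
  case False
  assume y: "0 \<le> y"
  then have "y ^ 2 = y powr 2" using False by (simp add: powr_realpow)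
  moreover have "(y powr 2) powr p = y powr (2 * p)" by (rule powr_powr)
  ultimately show ?thesis by simp
qed simp

theorem corollary1:
  fixes M :: "'a measure" and Ys :: "'y measure" and P :: "'y \<Rightarrow> 'y measure"
    and Y :: "nat \<Rightarrow> 'a \<Rightarrow> 'y" and d\<^sub>Y :: "'y measure"
    and H :: "real^'d \<Rightarrow> 'y \<Rightarrow> real^'d" and h :: "real^'d \<Rightarrow> real^'d"
    and nrm :: "real^'d \<Rightarrow> real" and w_star w0 :: "real^'d"
    and \<nu> C\<alpha> C C' p :: real and K t :: nat
  assumes MC: "markov_chain M Ys P Y"
    and H_meas: "(\<lambda>(w, y). H w y) \<in> borel \<Otimes>\<^sub>M Ys \<rightarrow>\<^sub>M borel"
    \<comment> \<open>(A1)\<close>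
    and stat: "stationary_dist Ys P d\<^sub>Y"
    and stat_unique: "\<And>d'. stationary_dist Ys P d' \<Longrightarrow> d' = d\<^sub>Y"
    and mixing: "\<exists>\<rho> C\<^sub>A. 0 \<le> \<rho> \<and> \<rho> < 1 \<and>
                   (\<forall>y\<in>space Ys. \<forall>n. l1_dist (kstep Ys P n y) d\<^sub>Y \<le> C\<^sub>A * \<rho> ^ n)"
    \<comment> \<open>definition of h\<close>
    and h_def: "\<And>w. h w = (\<integral>y. H w y \<partial>d\<^sub>Y)"
    \<comment> \<open>(A2)\<close>
    and nrm: "is_norm nrm"
    and contr: "\<exists>\<kappa>. 0 \<le> \<kappa> \<and> \<kappa> < 1 \<and> (\<forall>w w'. nrm (h w - h w') \<le> \<kappa> * nrm (w - w'))"
    and fixp: "h w_star = w_star" and fixp_unique: "\<And>w. h w = w \<Longrightarrow> w = w_star"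
    \<comment> \<open>(A3)\<close>
    and lip: "\<exists>L\<^sub>h. \<forall>w w'. \<forall>y\<in>space Ys. nrm (H w y - H w' y) \<le> L\<^sub>h * nrm (w - w')"
    and bdd: "\<exists>B. \<forall>y\<in>space Ys. nrm (H 0 y) \<le> B"
    \<comment> \<open>parameters\<close>
    and \<nu>: "0 < \<nu>" "\<nu> < 1" and C\<alpha>: "0 < C\<alpha>"
    and K: "0 < K" and C: "0 < C" and C': "0 \<le> C'"
    \<comment> \<open>high-probability concentration bound\<close>
    and conc: "\<And>\<delta>. 0 < \<delta> \<Longrightarrow> \<delta> < 1 \<Longrightarrow>
       prob_space.prob M {x \<in> space M. \<forall>s.
          (nrm (sa_iter H (step_size C\<alpha> \<nu>) w0 Y s x - w_star))\<^sup>2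
            \<le> a_fun C \<nu> s * (ln (1 / \<delta>) + b_fun C' \<nu> s) ^ K} \<ge> 1 - \<delta>"
    and p: "2 \<le> p"
  shows "(\<integral>\<^sup>+x. ennreal (nrm (sa_iter H (step_size C\<alpha> \<nu>) w0 Y t x - w_star) powr (2 * p)) \<partial>M)
           \<le> ennreal ((a_fun C \<nu> t * b_fun C' \<nu> t ^ K) powr p
              + real K * p * a_fun C \<nu> t powr p * exp (b_fun C' \<nu> t) * Gamma (real K * p + 1))"
proof -
  have PS: "prob_space M" and Ymeas: "\<And>t. Y t \<in> M \<rightarrow>\<^sub>M Ys"
    using MC unfolding markov_chain_def by auto
  interpret prob_space M by (rule PS)
  define N where "N x = nrm (sa_iter H (step_size C\<alpha> \<nu>) w0 Y t x - w_star)" for x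
  define a where "a = a_fun C \<nu> t"
  define b where "b = b_fun C' \<nu> t"
  define q where "q = real K * p"
  have N0: "0 \<le> N x" for x using nrm unfolding N_def is_norm_def by auto
  have Nm[measurable]: "N \<in> borel_measurable M"
  proof -
    have "(\<lambda>x. sa_iter H (step_size C\<alpha> \<nu>) w0 Y t x) \<in> borel_measurable M"
      by (rule sa_iter_meas[OF Ymeas H_meas])
    then have "(\<lambda>x. sa_iter H (step_size C\<alpha> \<nu>) w0 Y t x - w_star) \<in> borel_measurable M" by simp
    from measurable_compose[OF this is_norm_meas[OF nrm]] show ?thesis
      unfolding N_def by simp
  qed
  have a0: "0 < a" unfolding a_def a_fun_def using C by simp
  have b0: "0 \<le> b" unfolding b_def b_fun_def using C' \<nu> by (intro add_nonneg_nonneg divide_nonneg_pos) auto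
  have q1: "1 < q"
  proof -
    have "1 \<le> real K" using K by simp
    then have "p \<le> real K * p" using mult_right_mono[OF \<open>1 \<le> real K\<close>, of p] p by simp
    then show ?thesis unfolding q_def using p by linarith
  qed
  have tail: "emeasure M {x\<in>space M. a * r ^ K < (N x)\<^sup>2} \<le> ennreal (exp (b - r))" if r: "b \<le> r" for r
  proof (cases "r = b")
    case True
    have "emeasure M {x\<in>space M. a * r ^ K < (N x)\<^sup>2} \<le> 1" by (rule emeasure_le_1)
    then show ?thesis using True by simp
  next
    case False
    then have rb: "b < r" using r by simp
    define \<delta> where "\<delta> = exp (b - r)"
    have \<delta>0: "0 < \<delta>" and \<delta>1: "\<delta> < 1" unfolding \<delta>_def using rb by auto
    have l: "ln (1 / \<delta>) + b = r" unfolding \<delta>_def by (simp add: ln_div)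
    define G where "G = {x\<in>space M. (N x)\<^sup>2 \<le> a * r ^ K}"
    have Gm: "G \<in> events" unfolding G_def by measurable
    have sub: "{x \<in> space M. \<forall>s.
          (nrm (sa_iter H (step_size C\<alpha> \<nu>) w0 Y s x - w_star))\<^sup>2
            \<le> a_fun C \<nu> s * (ln (1 / \<delta>) + b_fun C' \<nu> s) ^ K} \<subseteq> G"
      unfolding G_def N_def using l unfolding a_def b_def by auto
    have "1 - \<delta> \<le> prob G"
      using conc[OF \<delta>0 \<delta>1] finite_measure_mono[OF sub Gm] by linarith
    moreover have "{x\<in>space M. a * r ^ K < (N x)\<^sup>2} = space M - G" unfolding G_def by auto
    ultimately have "prob {x\<in>space M. a * r ^ K < (N x)\<^sup>2} \<le> \<delta>"
      using prob_compl[OF Gm] by simp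
    then show ?thesis unfolding \<delta>_def by (simp add: emeasure_eq_measure)
  qed
  define F where "F x r = ennreal (q * r powr (q - 1)) * indicator {r. b \<le> r \<and> a * r ^ K < (N x)\<^sup>2} r" for x r
  have Fm: "case_prod F \<in> borel_measurable (M \<Otimes>\<^sub>M lborel)"
    unfolding F_def by measurable
  interpret PSF: pair_sigma_finite M lborel
    by (intro pair_sigma_finite.intro) (simp_all add: sigma_finite_lborel prob_space_imp_sigma_finite PS)
  have pw: "ennreal (N x powr (2 * p)) \<le> ennreal (a powr p * b powr q) + ennreal (a powr p) * (\<integral>\<^sup>+r. F x r \<partial>lborel)" for x
    unfolding F_def q_def powr_2p[OF N0]
    by (rule pointwise[OF a0 b0 _ K]) (use p in auto)
  have inner_m: "(\<lambda>x. \<integral>\<^sup>+r. F x r \<partial>lborel) \<in> borel_measurable M"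
    using Fm by (rule lborel.borel_measurable_nn_integral)
  have "(\<integral>\<^sup>+x. ennreal (N x powr (2 * p)) \<partial>M)
      \<le> (\<integral>\<^sup>+x. ennreal (a powr p * b powr q) + ennreal (a powr p) * (\<integral>\<^sup>+r. F x r \<partial>lborel) \<partial>M)"
    by (intro nn_integral_mono pw)
  also have "\<dots> = ennreal (a powr p * b powr q) + ennreal (a powr p) * (\<integral>\<^sup>+x. \<integral>\<^sup>+r. F x r \<partial>lborel \<partial>M)"
    using inner_m by (simp add: nn_integral_add nn_integral_cmult emeasure_space_1)
  also have "(\<integral>\<^sup>+x. \<integral>\<^sup>+r. F x r \<partial>lborel \<partial>M) = (\<integral>\<^sup>+r. \<integral>\<^sup>+x. F x r \<partial>M \<partial>lborel)"
    using PSF.Fubini'[OF Fm] by simp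
  also have "\<dots> \<le> (\<integral>\<^sup>+r. ennreal (q * r powr (q - 1) * exp (b - r)) * indicator {b..} r \<partial>lborel)"
  proof (intro nn_integral_mono)
    fix r :: real
    define S where "S = {x\<in>space M. b \<le> r \<and> a * r ^ K < (N x)\<^sup>2}"
    have Sm: "S \<in> events" unfolding S_def by measurable
    have "(\<integral>\<^sup>+x. F x r \<partial>M) = (\<integral>\<^sup>+x. ennreal (q * r powr (q - 1)) * indicator S x \<partial>M)"
      by (intro nn_integral_cong) (auto simp: F_def S_def indicator_def)
    also have "\<dots> = ennreal (q * r powr (q - 1)) * emeasure M S"
      using Sm by (rule nn_integral_cmult_indicator)
    also have "\<dots> \<le> ennreal (q * r powr (q - 1) * exp (b - r)) * indicator {b..} r"
    proof (cases "b \<le> r")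
      case True
      then have "S = {x\<in>space M. a * r ^ K < (N x)\<^sup>2}" unfolding S_def by simp
      then have "emeasure M S \<le> ennreal (exp (b - r))" using tail[OF True] by simp
      then have "ennreal (q * r powr (q - 1)) * emeasure M S \<le> ennreal (q * r powr (q - 1)) * ennreal (exp (b - r))"
        by (rule mult_left_mono) simp
      also have "\<dots> = ennreal (q * r powr (q - 1) * exp (b - r))"
        using q1 by (simp add: ennreal_mult'[symmetric])
      finally show ?thesis using True by simp
    next
      case False
      then have "S = {}" unfolding S_def by simp
      then show ?thesis by simp
    qed
    finally show "(\<integral>\<^sup>+x. F x r \<partial>M) \<le> ennreal (q * r powr (q - 1) * exp (b - r)) * indicator {b..} r" .
  qed
  also have "\<dots> \<le> ennreal (q * exp b * Gamma q)"
    by (rule gamma_bound[OF b0 q1])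
  finally have main: "(\<integral>\<^sup>+x. ennreal (N x powr (2 * p)) \<partial>M)
     \<le> ennreal (a powr p * b powr q) + ennreal (a powr p) * ennreal (q * exp b * Gamma q)"
    by (simp add: mult_left_mono add_left_mono)
  have Gq: "0 < Gamma q" using q1 by (intro Gamma_real_pos) simp
  have Gq1: "Gamma (q + 1) = q * Gamma q" using q1 nonpos_Ints_nonpos[of q] by (intro Gamma_plus1) force
  have "Gamma q \<le> Gamma (q + 1)" unfolding Gq1 using q1 Gq by simp
  then have r1: "a powr p * (q * exp b * Gamma q) \<le> q * a powr p * exp b * Gamma (q + 1)"
    using q1 by (simp add: mult_left_mono mult.assoc mult.left_commute)
  have r2: "a powr p * b powr q = (a * b ^ K) powr p"
  proof (cases "b = 0")
    case True then show ?thesis using K q1 unfolding q_def by simp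
  next
    case False
    then have "b ^ K = b powr K" using b0 by (simp add: powr_realpow)
    then have "(b ^ K) powr p = b powr q" unfolding q_def by (simp add: powr_powr)
    moreover have "(a * b ^ K) powr p = a powr p * (b ^ K) powr p" using a0 b0 by (simp add: powr_mult)
    ultimately show ?thesis by simp
  qed
  have "ennreal (a powr p * b powr q) + ennreal (a powr p) * ennreal (q * exp b * Gamma q)
      = ennreal (a powr p * b powr q + a powr p * (q * exp b * Gamma q))"
    using q1 Gq b0 by (simp add: ennreal_mult'[symmetric] ennreal_plus[symmetric] del: ennreal_plus)
  also have "\<dots> \<le> ennreal ((a * b ^ K) powr p + q * a powr p * exp b * Gamma (q + 1))"
    using r1 r2 by (intro ennreal_leI) simp
  finally show ?thesis using main unfolding N_def a_def b_def q_def by simp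
qed

end
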